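(* Let $\zeta_5=e^{2\pi i/5}$, let $A=\theta[1;\tfrac15]$ and $B=\theta[1;\tfrac35]$ (theta constants, functions of $\tau$), and for $k\in\{1,3,5,7,9\}$ let $g_k=\theta[\tfrac35;\tfrac k5](\zeta,\tau)$. Then for every $(\zeta,\tau)\in\mathbb{C}\times\mathbb{H}^2$: $$B^2g_1g_9-A^2g_3g_7+ABg_5^2=0,$$ $$\zeta_5A^2g_3g_9-\zeta_5B^2g_5g_7+ABg_1^2=0,$$ $$B^2g_1g_3+\zeta_5A^2g_5g_9-\zeta_5ABg_7^2=0,$$ $$A^2g_1g_5+\zeta_5B^2g_7g_9-ABg_3^2=0,$$ $$A^2g_1g_7-B^2g_3g_5+\zeta_5ABg_9^2=0.$$
   Context: Let $\mathbb{H}^2=\{\tau\in\mathbb{C}:\Im\tau>0\}$. For $(\epsilon,\epsilon')\in\mathbb{R}^2$, $$\theta[\epsilon;\epsilon'](\zeta,\tau)=\sum_{n\in\mathbb{Z}}\exp\Big(2\pi i\Big[\tfrac12\big(n+\tfrac{\epsilon}{2}\big)^2\tau+\big(n+\tfrac{\epsilon}{2}\big)\big(\zeta+\tfrac{\epsilon'}{2}\big)\Big]\Big),$$ and $\theta[\epsilon;\epsilon']=\theta[\epsilon;\epsilon'](0,\tau)$ denotes the theta constant. *)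

theory Defs
  imports "HOL-Analysis.Analysis"
begin

definition theta_char :: "real \<Rightarrow> real \<Rightarrow> complex \<Rightarrow> complex \<Rightarrow> complex" where
  "theta_char e e' z t =
     (\<Sum>\<^sub>\<infinity>n::int. exp (2 * of_real pi * \<i> *
        ((1/2) * (of_int n + of_real e / 2)^2 * t
         + (of_int n + of_real e / 2) * (z + of_real e' / 2))))"

definition theta_const :: "real \<Rightarrow> real \<Rightarrow> complex \<Rightarrow> complex" where
  "theta_const e e' t = theta_char e e' 0 t"

end

theory Submission
  imports Defs "HOL-Analysis.Analysis"
begin

definition ee :: "real \<Rightarrow> complex" where
  "ee r = exp (2 * of_real pi * \<i> * of_real r)"

lemma ee_add: "ee (a + b) = ee a * ee b"
  unfolding ee_def by (simp add: distrib_left exp_add[symmetric])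

lemma ee_int: "r \<in> \<int> \<Longrightarrow> ee r = 1"
proof -
  assume "r \<in> \<int>"
  from exp_integer_2pi[OF this] show ?thesis unfolding ee_def by (simp add: mult_ac)
qed

lemma ee_half: "ee (1/2) = -1"
  unfolding ee_def by (simp add: exp_pi_i')

lemma norm_ee: "norm (ee r) = 1"
  unfolding ee_def by simp

lemma ee_zero: "ee 0 = 1" unfolding ee_def by simp

lemma sum_int_exp_abs: "(\<lambda>n::int. exp (- \<bar>real_of_int n\<bar>)) summable_on UNIV"
proof -
  have g: "summable (\<lambda>n::nat. exp (- real n))"
  proof -
    have "summable (\<lambda>n::nat. (exp (-1::real)) ^ n)" by (rule summable_geometric) auto
    moreover have "(\<lambda>n::nat. (exp (-1::real)) ^ n) = (\<lambda>n. exp (- real n))"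
      by (rule ext, subst exp_of_nat_mult[symmetric]) simp
    ultimately show ?thesis by simp
  qed
  then have g1: "(\<lambda>n::nat. exp (- real n)) summable_on UNIV"
    by (simp add: summable_on_UNIV_nonneg_real_iff)
  have "summable (\<lambda>n::nat. exp (- real (Suc n)))"
    using summable_Suc_iff[THEN iffD2, OF g] by simp
  moreover have "(\<lambda>n::nat. exp (- real (Suc n))) = (\<lambda>n. exp (- real n - 1))"
    by (rule ext) (simp add: algebra_simps)
  ultimately have g2: "(\<lambda>n::nat. exp (- real n - 1)) summable_on UNIV"
    by (simp add: summable_on_UNIV_nonneg_real_iff)
  let ?f = "\<lambda>n::int. exp (- \<bar>real_of_int n\<bar>)"
  have A: "?f summable_on (int ` UNIV)"
    by (subst summable_on_reindex) (auto simp: o_def g1)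
  have B: "?f summable_on ((\<lambda>n. - int (Suc n)) ` UNIV)"
    by (subst summable_on_reindex) (auto simp: o_def g2 inj_on_def)
  have U: "UNIV = int ` UNIV \<union> (\<lambda>n. - int (Suc n)) ` UNIV"
  proof (safe)
    fix x :: int assume "x \<notin> range (\<lambda>n. - int (Suc n))"
    moreover have "x < 0 \<Longrightarrow> x = - int (Suc (nat (- x - 1)))" by simp
    ultimately have "x \<ge> 0" by (metis linorder_not_le rangeI)
    then show "x \<in> range int" by (metis nonneg_eq_int rangeI)
  qed auto
  have "?f summable_on UNIV"
    by (subst U, rule summable_on_Un_disjoint[OF A B]) auto
  then show ?thesis by simp
qed

definition tf :: "complex \<Rightarrow> complex \<Rightarrow> real \<Rightarrow> real \<Rightarrow> complex" where
  "tf t zz c x = exp (2 * of_real pi * \<i> * ((1/2) * (of_real x)^2 * t + of_real x * (zz + of_real c)))"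

lemma norm_tf: "norm (tf t zz c x) = exp (- pi * Im t * x^2 - 2 * pi * x * Im zz)"
proof -
  have "Re (2 * of_real pi * \<i> * ((1/2) * (of_real x)^2 * t + of_real x * (zz + of_real c)))
        = - pi * Im t * x^2 - 2 * pi * x * Im zz"
    by (simp add: power2_eq_square algebra_simps)
  then show ?thesis unfolding tf_def by simp
qed

lemma quad_bound:
  fixes a b x :: real
  assumes "a > 0"
  shows "- a * x^2 + b * x \<le> (\<bar>b\<bar> + 1)^2 / (4 * a) - \<bar>x\<bar>"
proof -
  define B where "B = \<bar>b\<bar> + 1"
  define m where "m = B / (2 * a)"
  have "0 \<le> a * (\<bar>x\<bar> - m)^2" using assms by simp
  also have "a * (\<bar>x\<bar> - m)^2 = a * x^2 - B * \<bar>x\<bar> + B^2 / (4 * a)"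
    using assms unfolding m_def by (simp add: power2_eq_square field_simps)
  finally have 1: "0 \<le> a * x^2 - B * \<bar>x\<bar> + B^2 / (4 * a)" .
  have 2: "b * x \<le> \<bar>b\<bar> * \<bar>x\<bar>" by (metis abs_ge_self abs_mult)
  show ?thesis using 1 2 unfolding B_def by (simp add: algebra_simps)
qed

lemma tf_summable_norm:
  assumes "Im t > 0"
  shows "(\<lambda>n::int. norm (tf t zz c (of_int n + s))) summable_on UNIV"
proof (rule summable_on_comparison_test)
  define K where "K = (\<bar>- 2 * pi * Im zz\<bar> + 1)^2 / (4 * (pi * Im t))"
  show "(\<lambda>n::int. exp (K + \<bar>s\<bar>) * exp (- \<bar>real_of_int n\<bar>)) summable_on UNIV"
    by (rule summable_on_cmult_right[OF sum_int_exp_abs])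
  fix n :: int
  show "0 \<le> norm (tf t zz c (of_int n + s))" by simp
  let ?x = "real_of_int n + s"
  have "- (pi * Im t) * ?x^2 + (- 2 * pi * Im zz) * ?x \<le> K - \<bar>?x\<bar>"
    unfolding K_def by (rule quad_bound) (use assms in simp)
  moreover have "- \<bar>?x\<bar> \<le> \<bar>s\<bar> - \<bar>real_of_int n\<bar>" by linarith
  ultimately have "- pi * Im t * ?x^2 - 2 * pi * ?x * Im zz \<le> K + \<bar>s\<bar> + - \<bar>real_of_int n\<bar>"
    by (simp add: algebra_simps)
  then show "norm (tf t zz c (of_int n + s)) \<le> exp (K + \<bar>s\<bar>) * exp (- \<bar>real_of_int n\<bar>)"
    unfolding norm_tf by (simp add: exp_add[symmetric])
qed

lemma prod_norm_summable:
  fixes f :: "'a \<Rightarrow> 'c::{real_normed_field,banach}" and g :: "'b \<Rightarrow> 'c"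
  assumes f: "(\<lambda>x. norm (f x)) summable_on A" and g: "(\<lambda>y. norm (g y)) summable_on B"
  shows "(\<lambda>p. norm (case p of (x,y) \<Rightarrow> f x * g y)) summable_on A \<times> B"
proof -
  have "(\<lambda>p. norm ((\<lambda>p. case p of (x,y) \<Rightarrow> f x * g y) p)) summable_on Sigma A (\<lambda>_. B)"
  proof (rule Infinite_Sum.abs_summable_on_Sigma_iff[THEN iffD2], intro conjI ballI)
    fix x assume "x \<in> A"
    show "(\<lambda>y. norm (case (x, y) of (x, y) \<Rightarrow> f x * g y)) summable_on B"
      using summable_on_cmult_right[OF g, of "norm (f x)"] by (simp add: norm_mult)
  next
    have eq: "\<And>x. infsum (\<lambda>y. norm (f x * g y)) B = norm (f x) * infsum (\<lambda>y. norm (g y)) B"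
      by (simp add: norm_mult infsum_cmult_right')
    show "(\<lambda>x. norm (infsum (\<lambda>y. norm (case (x, y) of (x, y) \<Rightarrow> f x * g y)) B)) summable_on A"
      using summable_on_cmult_left[OF f, of "infsum (\<lambda>y. norm (g y)) B"]
      by (simp add: eq abs_mult infsum_nonneg)
  qed
  then show ?thesis by simp
qed

lemma prod_infsum:
  fixes f :: "'a \<Rightarrow> 'c::{real_normed_field,banach}" and g :: "'b \<Rightarrow> 'c"
  assumes f: "(\<lambda>x. norm (f x)) summable_on A" and g: "(\<lambda>y. norm (g y)) summable_on B"
  shows "infsum (\<lambda>(x,y). f x * g y) (A \<times> B) = infsum f A * infsum g B"
proof -
  have s: "(\<lambda>(x,y). f x * g y) summable_on A \<times> B"
    using prod_norm_summable[OF f g] abs_summable_summable by blast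
  have "infsum (\<lambda>(x,y). f x * g y) (A \<times> B) = infsum (\<lambda>x. infsum (\<lambda>y. f x * g y) B) A"
    using infsum_Sigma'_banach[of "\<lambda>x y. f x * g y" A "\<lambda>_. B"] s by simp
  also have "\<dots> = infsum (\<lambda>x. f x * infsum g B) A"
    by (simp add: infsum_cmult_right')
  also have "\<dots> = infsum f A * infsum g B"
    by (simp add: infsum_cmult_left')
  finally show ?thesis .
qed

type_synonym r4 = "real \<times> real \<times> real \<times> real"

definition FF :: "complex \<Rightarrow> complex \<Rightarrow> real \<Rightarrow> real \<Rightarrow> real \<Rightarrow> real \<Rightarrow> r4 \<Rightarrow> complex" where
  "FF t z c1 c2 c3 c4 = (\<lambda>(w1,w2,w3,w4). tf t 0 c1 w1 * (tf t 0 c2 w2 * (tf t z c3 w3 * tf t z c4 w4)))"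

definition Sh :: "real \<Rightarrow> real \<Rightarrow> real \<Rightarrow> real \<Rightarrow> r4 set" where
  "Sh a1 a2 a3 a4 = {(w1,w2,w3,w4). w1 - a1 \<in> \<int> \<and> w2 - a2 \<in> \<int> \<and> w3 - a3 \<in> \<int> \<and> w4 - a4 \<in> \<int>}"

definition mp :: "real \<Rightarrow> real \<Rightarrow> real \<Rightarrow> real \<Rightarrow> int \<times> int \<times> int \<times> int \<Rightarrow> r4" where
  "mp a1 a2 a3 a4 = (\<lambda>(n1,n2,n3,n4). (of_int n1 + a1, of_int n2 + a2, of_int n3 + a3, of_int n4 + a4))"

definition th1 :: "complex \<Rightarrow> complex \<Rightarrow> real \<Rightarrow> real \<Rightarrow> complex" where
  "th1 t zz c s = infsum (\<lambda>n::int. tf t zz c (of_int n + s)) UNIV"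

lemma inj_mp: "inj (mp a1 a2 a3 a4)"
  unfolding mp_def inj_def by auto

lemma Sh_mp: "Sh a1 a2 a3 a4 = range (mp a1 a2 a3 a4)"
proof (intro equalityI subsetI)
  fix w assume w: "w \<in> Sh a1 a2 a3 a4"
  obtain w1 w2 w3 w4 where ww: "w = (w1,w2,w3,w4)" by (cases w) auto
  have "w1 - a1 \<in> \<int>" "w2 - a2 \<in> \<int>" "w3 - a3 \<in> \<int>" "w4 - a4 \<in> \<int>" using w unfolding ww Sh_def by auto
  then obtain n1 n2 n3 n4 where "w1 - a1 = of_int n1" "w2 - a2 = of_int n2"
       "w3 - a3 = of_int n3" "w4 - a4 = of_int n4" by (metis Ints_cases)
  then have "w = mp a1 a2 a3 a4 (n1,n2,n3,n4)" unfolding mp_def ww by simp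
  then show "w \<in> range (mp a1 a2 a3 a4)" by blast
next
  fix w assume "w \<in> range (mp a1 a2 a3 a4)"
  then show "w \<in> Sh a1 a2 a3 a4" unfolding mp_def Sh_def by auto
qed

lemma FF_mp: "FF t z c1 c2 c3 c4 \<circ> mp a1 a2 a3 a4 =
  (\<lambda>(n1,p). tf t 0 c1 (of_int n1 + a1) * (\<lambda>(n2,q). tf t 0 c2 (of_int n2 + a2) *
     (\<lambda>(n3,n4). tf t z c3 (of_int n3 + a3) * tf t z c4 (of_int n4 + a4)) q) p)"
  unfolding FF_def mp_def by (auto simp: fun_eq_iff)

lemma UNIV4: "(UNIV :: (int \<times> int \<times> int \<times> int) set) = UNIV \<times> (UNIV \<times> (UNIV \<times> UNIV))"
  by simp

lemma FF_norm_summable: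
  assumes "Im t > 0"
  shows "(\<lambda>w. norm (FF t z c1 c2 c3 c4 w)) summable_on Sh a1 a2 a3 a4"
proof -
  have n1: "(\<lambda>n::int. norm (tf t zz c (of_int n + s))) summable_on UNIV" for zz c s
    using tf_summable_norm[OF assms] .
  have h: "(\<lambda>p. norm (case p of (n3,n4) \<Rightarrow> tf t z c3 (of_int n3 + a3) * tf t z c4 (of_int n4 + a4))) summable_on UNIV \<times> UNIV"
    by (rule prod_norm_summable[OF n1 n1])
  have g: "(\<lambda>p. norm (case p of (n2,q) \<Rightarrow> tf t 0 c2 (of_int n2 + a2) * (\<lambda>(n3,n4). tf t z c3 (of_int n3 + a3) * tf t z c4 (of_int n4 + a4)) q)) summable_on UNIV \<times> (UNIV \<times> UNIV)"
    by (rule prod_norm_summable[OF n1 h])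
  have f: "(\<lambda>p. norm ((FF t z c1 c2 c3 c4 \<circ> mp a1 a2 a3 a4) p)) summable_on UNIV"
    unfolding FF_mp UNIV4 by (rule prod_norm_summable[OF n1 g])
  then have "(\<lambda>w. norm (FF t z c1 c2 c3 c4 w)) summable_on range (mp a1 a2 a3 a4)"
    using summable_on_reindex[where h="mp a1 a2 a3 a4" and A=UNIV and g="\<lambda>w. norm (FF t z c1 c2 c3 c4 w)"] inj_mp
    by (simp add: o_def)
  then show ?thesis by (simp add: Sh_mp)
qed

lemma FF_summable:
  assumes "Im t > 0"
  shows "FF t z c1 c2 c3 c4 summable_on Sh a1 a2 a3 a4"
  using FF_norm_summable[OF assms] abs_summable_summable by blast

lemma FF_infsum:
  assumes "Im t > 0"
  shows "infsum (FF t z c1 c2 c3 c4) (Sh a1 a2 a3 a4) =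
     th1 t 0 c1 a1 * (th1 t 0 c2 a2 * (th1 t z c3 a3 * th1 t z c4 a4))"
proof -
  have n1: "(\<lambda>n::int. norm (tf t zz c (of_int n + s))) summable_on UNIV" for zz c s
    using tf_summable_norm[OF assms] .
  have h: "(\<lambda>p. norm (case p of (n3,n4) \<Rightarrow> tf t z c3 (of_int n3 + a3) * tf t z c4 (of_int n4 + a4))) summable_on UNIV \<times> UNIV"
    by (rule prod_norm_summable[OF n1 n1])
  have hs: "infsum (\<lambda>(n3,n4). tf t z c3 (of_int n3 + a3) * tf t z c4 (of_int n4 + a4)) (UNIV \<times> UNIV) = th1 t z c3 a3 * th1 t z c4 a4"
    unfolding th1_def by (rule prod_infsum[OF n1 n1])
  have gs: "infsum (\<lambda>(n2,q). tf t 0 c2 (of_int n2 + a2) * (\<lambda>(n3,n4). tf t z c3 (of_int n3 + a3) * tf t z c4 (of_int n4 + a4)) q) (UNIV \<times> (UNIV \<times> UNIV)) = th1 t 0 c2 a2 * (th1 t z c3 a3 * th1 t z c4 a4)"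
    using prod_infsum[OF n1 h] hs unfolding th1_def by simp
  have g: "(\<lambda>p. norm (case p of (n2,q) \<Rightarrow> tf t 0 c2 (of_int n2 + a2) * (\<lambda>(n3,n4). tf t z c3 (of_int n3 + a3) * tf t z c4 (of_int n4 + a4)) q)) summable_on UNIV \<times> (UNIV \<times> UNIV)"
    by (rule prod_norm_summable[OF n1 h])
  have "infsum (FF t z c1 c2 c3 c4) (Sh a1 a2 a3 a4) = infsum (FF t z c1 c2 c3 c4 \<circ> mp a1 a2 a3 a4) UNIV"
    unfolding Sh_mp by (rule infsum_reindex[OF inj_mp[THEN inj_on_subset]]) simp
  also have "\<dots> = th1 t 0 c1 a1 * (th1 t 0 c2 a2 * (th1 t z c3 a3 * th1 t z c4 a4))"
    unfolding FF_mp UNIV4 using prod_infsum[OF n1 g] gs unfolding th1_def by simp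
  finally show ?thesis .
qed

definition Rs where "Rs t z c1 c2 c3 c4 a1 a2 a3 a4 = infsum (FF t z c1 c2 c3 c4) (Sh a1 a2 a3 a4)"

lemma tf_shift: "tf t zz (c + k) x = tf t zz c x * ee (k * x)"
  unfolding tf_def ee_def by (simp add: exp_add[symmetric] algebra_simps)

lemma ee_Sh:
  assumes "(w1,w2,w3,w4) \<in> Sh a1 a2 a3 a4" "k1 \<in> \<int>" "k2 \<in> \<int>" "k3 \<in> \<int>" "k4 \<in> \<int>"
  shows "ee (k1 * w1 + k2 * w2 + k3 * w3 + k4 * w4) = ee (k1 * a1 + k2 * a2 + k3 * a3 + k4 * a4)"
proof -
  have "k1 * (w1 - a1) + k2 * (w2 - a2) + k3 * (w3 - a3) + k4 * (w4 - a4) \<in> \<int>"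
    using assms unfolding Sh_def by (auto intro!: Ints_add Ints_mult)
  then have "ee (k1 * (w1 - a1) + k2 * (w2 - a2) + k3 * (w3 - a3) + k4 * (w4 - a4)) = 1"
    by (rule ee_int)
  moreover have "k1 * w1 + k2 * w2 + k3 * w3 + k4 * w4 =
     (k1 * (w1 - a1) + k2 * (w2 - a2) + k3 * (w3 - a3) + k4 * (w4 - a4)) + (k1 * a1 + k2 * a2 + k3 * a3 + k4 * a4)"
    by (simp add: algebra_simps)
  ultimately show ?thesis by (simp add: ee_add)
qed

lemma FF_shift: "FF t z (c1 + k1) (c2 + k2) (c3 + k3) (c4 + k4) (w1,w2,w3,w4) =
   ee (k1 * w1 + k2 * w2 + k3 * w3 + k4 * w4) * FF t z c1 c2 c3 c4 (w1,w2,w3,w4)"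
  unfolding FF_def by (simp add: tf_shift ee_add)

lemma Rs_shift:
  assumes "k1 \<in> \<int>" "k2 \<in> \<int>" "k3 \<in> \<int>" "k4 \<in> \<int>"
  shows "Rs t z (c1 + k1) (c2 + k2) (c3 + k3) (c4 + k4) a1 a2 a3 a4 =
         ee (k1 * a1 + k2 * a2 + k3 * a3 + k4 * a4) * Rs t z c1 c2 c3 c4 a1 a2 a3 a4"
proof -
  have "Rs t z (c1 + k1) (c2 + k2) (c3 + k3) (c4 + k4) a1 a2 a3 a4 =
        infsum (\<lambda>w. ee (k1 * a1 + k2 * a2 + k3 * a3 + k4 * a4) * FF t z c1 c2 c3 c4 w) (Sh a1 a2 a3 a4)"
    unfolding Rs_def
  proof (rule infsum_cong)
    fix w assume "w \<in> Sh a1 a2 a3 a4"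
    moreover obtain w1 w2 w3 w4 where "w = (w1,w2,w3,w4)" by (cases w) auto
    ultimately show "FF t z (c1 + k1) (c2 + k2) (c3 + k3) (c4 + k4) w =
          ee (k1 * a1 + k2 * a2 + k3 * a3 + k4 * a4) * FF t z c1 c2 c3 c4 w"
      using ee_Sh[OF _ assms] FF_shift by metis
  qed
  then show ?thesis unfolding Rs_def by (simp add: infsum_cmult_right')
qed

definition SS :: "r4 set" where "SS = Sh (1/2) (1/2) (3/10) (3/10) \<union> Sh 0 0 (4/5) (4/5)"

definition Hm :: "r4 \<Rightarrow> r4" where
  "Hm = (\<lambda>(w1,w2,w3,w4). ((w1-w2+w3-w4)/2, (w1-w2-w3+w4)/2, (w1+w2+w3+w4)/2, (-w1-w2+w3+w4)/2))"
definition Tm :: "r4 \<Rightarrow> r4" where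
  "Tm = (\<lambda>(w1,w2,w3,w4). ((w1+w2+w3-w4)/2, (-w1-w2+w3-w4)/2, (w1-w2+w3+w4)/2, (-w1+w2+w3+w4)/2))"

lemma HT: "Hm (Tm w) = w" "Tm (Hm w) = w"
  unfolding Hm_def Tm_def by (cases w, simp add: field_simps)+

lemma in_a0: "(of_int m1 + 1/2, of_int m2 + 1/2, of_int m3 + 3/10, of_int m4 + 3/10) \<in> SS"
  unfolding SS_def Sh_def by simp
lemma in_b: "(of_int m1, of_int m2, of_int m3 + 4/5, of_int m4 + 4/5) \<in> SS"
  unfolding SS_def Sh_def by simp

lemma SS_cases:
  assumes "w \<in> SS"
  obtains n1 n2 n3 n4 where "w = (of_int n1 + 1/2, of_int n2 + 1/2, of_int n3 + 3/10, of_int n4 + 3/10)"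
  | n1 n2 n3 n4 where "w = (of_int n1, of_int n2, of_int n3 + 4/5, of_int n4 + 4/5)"
proof -
  have "w \<in> range (mp (1/2) (1/2) (3/10) (3/10)) \<or> w \<in> range (mp 0 0 (4/5) (4/5))"
    using assms unfolding SS_def Sh_mp by blast
  then show ?thesis
  proof
    assume "w \<in> range (mp (1/2) (1/2) (3/10) (3/10))"
    then obtain n where "w = mp (1/2) (1/2) (3/10) (3/10) n" by blast
    then show ?thesis using that(1) unfolding mp_def by (cases n) auto
  next
    assume "w \<in> range (mp 0 0 (4/5) (4/5))"
    then obtain n where "w = mp 0 0 (4/5) (4/5) n" by blast
    then show ?thesis using that(2) unfolding mp_def by (cases n) auto
  qed
qed

lemma int_parity: obtains k where "(n::int) = 2 * k" | k where "n = 2 * k + 1"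
  by (metis evenE oddE)

lemma Hm_SS: assumes "w \<in> SS" shows "Hm w \<in> SS"
  using assms
proof (cases rule: SS_cases)
  case (1 n1 n2 n3 n4)
  show ?thesis
  proof (cases rule: int_parity[of "n1+n2+n3+n4"])
    case (1 k)
    then have "Hm w = (of_int (k-n2-n4), of_int (k-n2-n3), of_int k + 4/5, of_int (k-n1-n2-1) + 4/5)"
      using \<open>w = _\<close> of_int_eq_iff[where 'a=real, THEN iffD2, OF \<open>n1+n2+n3+n4 = _\<close>] unfolding Hm_def
      by (simp; (intro conjI)?; linarith)
    then show ?thesis by (simp only: in_b)
  next
    case (2 k)
    then have "Hm w = (of_int (k-n2-n4) + 1/2, of_int (k-n2-n3) + 1/2, of_int (k+1) + 3/10, of_int (k-n1-n2) + 3/10)"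
      using \<open>w = _\<close> of_int_eq_iff[where 'a=real, THEN iffD2, OF \<open>n1+n2+n3+n4 = _\<close>] unfolding Hm_def
      by (simp; (intro conjI)?; linarith)
    then show ?thesis by (simp only: in_a0)
  qed
next
  case (2 n1 n2 n3 n4)
  show ?thesis
  proof (cases rule: int_parity[of "n1+n2+n3+n4"])
    case (1 k)
    then have "Hm w = (of_int (k-n2-n4), of_int (k-n2-n3), of_int k + 4/5, of_int (k-n1-n2) + 4/5)"
      using \<open>w = _\<close> of_int_eq_iff[where 'a=real, THEN iffD2, OF \<open>n1+n2+n3+n4 = _\<close>] unfolding Hm_def
      by (simp; (intro conjI)?; linarith)
    then show ?thesis by (simp only: in_b)
  next
    case (2 k)
    then have "Hm w = (of_int (k-n2-n4) + 1/2, of_int (k-n2-n3) + 1/2, of_int (k+1) + 3/10, of_int (k-n1-n2+1) + 3/10)"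
      using \<open>w = _\<close> of_int_eq_iff[where 'a=real, THEN iffD2, OF \<open>n1+n2+n3+n4 = _\<close>] unfolding Hm_def
      by (simp; (intro conjI)?; linarith)
    then show ?thesis by (simp only: in_a0)
  qed
qed

lemma Tm_SS: assumes "w \<in> SS" shows "Tm w \<in> SS"
  using assms
proof (cases rule: SS_cases)
  case (1 n1 n2 n3 n4)
  show ?thesis
  proof (cases rule: int_parity[of "n1+n2+n3+n4"])
    case (1 k)
    then have "Tm w = (of_int (k-n4) + 1/2, of_int (n3-k-1) + 1/2, of_int (k-n2) + 3/10, of_int (k-n1) + 3/10)"
      using \<open>w = _\<close> of_int_eq_iff[where 'a=real, THEN iffD2, OF \<open>n1+n2+n3+n4 = _\<close>] unfolding Tm_def
      by (simp; (intro conjI)?; linarith)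
    then show ?thesis by (simp only: in_a0)
  next
    case (2 k)
    then have "Tm w = (of_int (k+1-n4), of_int (n3-k-1), of_int (k-n2) + 4/5, of_int (k-n1) + 4/5)"
      using \<open>w = _\<close> of_int_eq_iff[where 'a=real, THEN iffD2, OF \<open>n1+n2+n3+n4 = _\<close>] unfolding Tm_def
      by (simp; (intro conjI)?; linarith)
    then show ?thesis by (simp only: in_b)
  qed
next
  case (2 n1 n2 n3 n4)
  show ?thesis
  proof (cases rule: int_parity[of "n1+n2+n3+n4"])
    case (1 k)
    then have "Tm w = (of_int (k-n4), of_int (n3-k), of_int (k-n2) + 4/5, of_int (k-n1) + 4/5)"
      using \<open>w = _\<close> of_int_eq_iff[where 'a=real, THEN iffD2, OF \<open>n1+n2+n3+n4 = _\<close>] unfolding Tm_def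
      by (simp; (intro conjI)?; linarith)
    then show ?thesis by (simp only: in_b)
  next
    case (2 k)
    then have "Tm w = (of_int (k-n4) + 1/2, of_int (n3-k-1) + 1/2, of_int (k-n2+1) + 3/10, of_int (k-n1+1) + 3/10)"
      using \<open>w = _\<close> of_int_eq_iff[where 'a=real, THEN iffD2, OF \<open>n1+n2+n3+n4 = _\<close>] unfolding Tm_def
      by (simp; (intro conjI)?; linarith)
    then show ?thesis by (simp only: in_a0)
  qed
qed

lemma bij_Hm: "bij_betw Hm SS SS"
  by (rule bij_betw_byWitness[where f'=Tm]) (auto simp: HT Hm_SS Tm_SS)

definition EE :: "complex \<Rightarrow> complex \<Rightarrow> r4 \<Rightarrow> complex" where
  "EE t z = (\<lambda>(w1,w2,w3,w4). exp (2 * of_real pi * \<i> * ((1/2) * of_real (w1^2 + w2^2 + w3^2 + w4^2) * t + of_real (w3 + w4) * z)))"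

lemma tf_split: "tf t zz c x = exp (2 * of_real pi * \<i> * ((1/2) * (of_real x)^2 * t + of_real x * zz)) * ee (c * x)"
  unfolding tf_def ee_def by (simp add: exp_add[symmetric] algebra_simps)

lemma FF_EE: "FF t z c1 c2 c3 c4 (w1,w2,w3,w4) = EE t z (w1,w2,w3,w4) * ee (c1 * w1 + c2 * w2 + c3 * w3 + c4 * w4)"
  unfolding FF_def EE_def tf_split ee_add
  by (simp add: exp_add[symmetric] algebra_simps)

lemma EE_Hm: "EE t z (Hm w) = EE t z w"
proof -
  obtain w1 w2 w3 w4 where w: "w = (w1,w2,w3,w4)" by (cases w) auto
  have 1: "((w1-w2+w3-w4)/2)^2 + ((w1-w2-w3+w4)/2)^2 + ((w1+w2+w3+w4)/2)^2 + ((-w1-w2+w3+w4)/2)^2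
      = w1^2 + w2^2 + w3^2 + w4^2"
    by (simp add: power2_eq_square field_simps)
  have 2: "(w1+w2+w3+w4)/2 + (-w1-w2+w3+w4)/2 = w3 + w4" by (simp add: field_simps)
  show ?thesis unfolding w Hm_def EE_def by (simp only: prod.case 1 2)
qed

definition DD where "DD t z c1 c2 c3 c4 = infsum (FF t z c1 c2 c3 c4) SS"

lemma DD_H: "DD t z c1 c2 c3 c4 = DD t z ((c1-c2+c3-c4)/2) ((c1-c2-c3+c4)/2) ((c1+c2+c3+c4)/2) ((-c1-c2+c3+c4)/2)"
proof -
  have "DD t z ((c1-c2+c3-c4)/2) ((c1-c2-c3+c4)/2) ((c1+c2+c3+c4)/2) ((-c1-c2+c3+c4)/2)
     = infsum (\<lambda>w. FF t z ((c1-c2+c3-c4)/2) ((c1-c2-c3+c4)/2) ((c1+c2+c3+c4)/2) ((-c1-c2+c3+c4)/2) (Hm w)) SS"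
    unfolding DD_def by (rule infsum_reindex_bij_betw[OF bij_Hm, symmetric])
  also have "\<dots> = DD t z c1 c2 c3 c4"
    unfolding DD_def
  proof (rule infsum_cong)
    fix w :: r4
    obtain w1 w2 w3 w4 where w: "w = (w1,w2,w3,w4)" by (cases w) auto
    have "Hm w = ((w1-w2+w3-w4)/2, (w1-w2-w3+w4)/2, (w1+w2+w3+w4)/2, (-w1-w2+w3+w4)/2)"
      unfolding w Hm_def by simp
    moreover have "(c1-c2+c3-c4)/2 * ((w1-w2+w3-w4)/2) + (c1-c2-c3+c4)/2 * ((w1-w2-w3+w4)/2)
        + (c1+c2+c3+c4)/2 * ((w1+w2+w3+w4)/2) + (-c1-c2+c3+c4)/2 * ((-w1-w2+w3+w4)/2)
        = c1 * w1 + c2 * w2 + c3 * w3 + c4 * w4"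
      by (simp add: field_simps)
    ultimately show "FF t z ((c1-c2+c3-c4)/2) ((c1-c2-c3+c4)/2) ((c1+c2+c3+c4)/2) ((-c1-c2+c3+c4)/2) (Hm w) = FF t z c1 c2 c3 c4 w"
      using EE_Hm[of t z w] unfolding w by (simp only: FF_EE)
  qed
  finally show ?thesis by simp
qed

lemma DD_reindex:
  assumes "bij_betw g SS SS" "\<And>w. FF t z d1 d2 d3 d4 (g w) = FF t z c1 c2 c3 c4 w"
  shows "DD t z c1 c2 c3 c4 = DD t z d1 d2 d3 d4"
proof -
  have "DD t z d1 d2 d3 d4 = infsum (\<lambda>w. FF t z d1 d2 d3 d4 (g w)) SS"
    unfolding DD_def by (rule infsum_reindex_bij_betw[OF assms(1), symmetric])
  then show ?thesis unfolding DD_def using assms(2) by simp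
qed

definition Nm :: "r4 \<Rightarrow> r4" where "Nm = (\<lambda>(w1,w2,w3,w4). (-w1,w2,w3,w4))"
definition Xm :: "r4 \<Rightarrow> r4" where "Xm = (\<lambda>(w1,w2,w3,w4). (w2,w1,w3,w4))"
definition Ym :: "r4 \<Rightarrow> r4" where "Ym = (\<lambda>(w1,w2,w3,w4). (w1,w2,w4,w3))"

lemma inv_invol: "Nm (Nm w) = w" "Xm (Xm w) = w" "Ym (Ym w) = w"
  unfolding Nm_def Xm_def Ym_def by (cases w, simp)+

lemma Nm_SS: assumes "w \<in> SS" shows "Nm w \<in> SS"
  using assms
proof (cases rule: SS_cases)
  case (1 n1 n2 n3 n4)
  then have "Nm w = (of_int (-n1-1) + 1/2, of_int n2 + 1/2, of_int n3 + 3/10, of_int n4 + 3/10)"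
    unfolding Nm_def by simp
  then show ?thesis by (simp only: in_a0)
next
  case (2 n1 n2 n3 n4)
  then have "Nm w = (of_int (-n1), of_int n2, of_int n3 + 4/5, of_int n4 + 4/5)"
    unfolding Nm_def by simp
  then show ?thesis by (simp only: in_b)
qed

lemma Xm_SS: assumes "w \<in> SS" shows "Xm w \<in> SS"
  using assms
proof (cases rule: SS_cases)
  case (1 n1 n2 n3 n4)
  then show ?thesis unfolding Xm_def by (simp add: in_a0)
next
  case (2 n1 n2 n3 n4)
  then show ?thesis unfolding Xm_def by (simp add: in_b)
qed

lemma Ym_SS: assumes "w \<in> SS" shows "Ym w \<in> SS"
  using assms
proof (cases rule: SS_cases)
  case (1 n1 n2 n3 n4)
  then show ?thesis unfolding Ym_def by (simp add: in_a0)
next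
  case (2 n1 n2 n3 n4)
  then show ?thesis unfolding Ym_def by (simp add: in_b)
qed

lemma tf_neg: "tf t 0 (-c) (-x) = tf t 0 c x"
  unfolding tf_def by simp

lemma FF_neg: "FF t z (-c1) c2 c3 c4 (Nm w) = FF t z c1 c2 c3 c4 w"
  by (cases w) (simp add: Nm_def FF_def tf_neg)
lemma FF_swx: "FF t z c2 c1 c3 c4 (Xm w) = FF t z c1 c2 c3 c4 w"
  by (cases w) (simp add: Xm_def FF_def mult.left_commute)
lemma FF_swy: "FF t z c1 c2 c4 c3 (Ym w) = FF t z c1 c2 c3 c4 w"
  by (cases w) (simp add: Ym_def FF_def mult.commute)

lemma bij_Nm: "bij_betw Nm SS SS"
  by (rule bij_betw_byWitness[where f'=Nm]) (auto simp: inv_invol Nm_SS)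

lemma DD_N: "DD t z c1 c2 c3 c4 = DD t z (-c1) c2 c3 c4"
  by (rule DD_reindex[where g=Nm, OF bij_Nm]) (simp add: FF_neg)

lemma bij_Xm: "bij_betw Xm SS SS"
  by (rule bij_betw_byWitness[where f'=Xm]) (auto simp: inv_invol Xm_SS)

lemma DD_X: "DD t z c1 c2 c3 c4 = DD t z c2 c1 c3 c4"
  by (rule DD_reindex[where g=Xm, OF bij_Xm]) (simp add: FF_swx)

lemma bij_Ym: "bij_betw Ym SS SS"
  by (rule bij_betw_byWitness[where f'=Ym]) (auto simp: inv_invol Ym_SS)

lemma DD_Y: "DD t z c1 c2 c3 c4 = DD t z c1 c2 c4 c3"
  by (rule DD_reindex[where g=Ym, OF bij_Ym]) (simp add: FF_swy)

lemma half_not_int: "(1/2::real) \<notin> \<int>"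
proof
  assume "(1/2::real) \<in> \<int>"
  then obtain m where m: "(1/2::real) = of_int m" by (auto elim: Ints_cases)
  then have "real_of_int (2 * m) = real_of_int 1" by simp
  then have "2 * m = 1" by (simp only: of_int_eq_iff)
  then show False by presburger
qed

lemma disj_SS: "Sh (1/2) (1/2) (3/10) (3/10) \<inter> Sh 0 0 (4/5) (4/5) = {}"
proof (rule equals0I)
  fix w assume w: "w \<in> Sh (1/2) (1/2) (3/10) (3/10) \<inter> Sh 0 0 (4/5) (4/5)"
  obtain w1 w2 w3 w4 where ww: "w = (w1,w2,w3,w4)" by (cases w) auto
  have "w1 - 1/2 \<in> \<int>" "w1 - 0 \<in> \<int>" using w unfolding ww Sh_def by auto
  then have "(w1 - 0) - (w1 - 1/2) \<in> \<int>" by (rule Ints_diff[rotated])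
  then have "(1/2::real) \<in> \<int>" by simp
  then show False using half_not_int by simp
qed

lemma DD_split:
  assumes "Im t > 0"
  shows "DD t z c1 c2 c3 c4 = Rs t z c1 c2 c3 c4 (1/2) (1/2) (3/10) (3/10) + Rs t z c1 c2 c3 c4 0 0 (4/5) (4/5)"
  unfolding DD_def Rs_def SS_def
  by (rule infsum_Un_disjoint[OF FF_summable[OF assms] FF_summable[OF assms] disj_SS])

lemma DD_shift:
  assumes "Im t > 0" "k1 \<in> \<int>" "k2 \<in> \<int>" "k3 \<in> \<int>" "k4 \<in> \<int>" "(k1 + k2 + k3 + k4) / 2 \<in> \<int>"
  shows "DD t z (c1 + k1) (c2 + k2) (c3 + k3) (c4 + k4) = ee (k1/2 + k2/2 + 3*k3/10 + 3*k4/10) * DD t z c1 c2 c3 c4"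
proof -
  define \<alpha> where "\<alpha> = k1/2 + k2/2 + 3*k3/10 + 3*k4/10"
  have "(k3 + k4) - (k1 + k2 + k3 + k4) / 2 \<in> \<int>"
    using assms by (intro Ints_diff Ints_add) auto
  then have one: "ee ((k3 + k4) - (k1 + k2 + k3 + k4) / 2) = 1" by (rule ee_int)
  have "ee (k1 * 0 + k2 * 0 + k3 * (4/5) + k4 * (4/5)) = ee (\<alpha> + ((k3 + k4) - (k1 + k2 + k3 + k4) / 2))"
    unfolding \<alpha>_def by (rule arg_cong[where f=ee]) (simp add: field_simps)
  also have "\<dots> = ee \<alpha>" by (simp only: ee_add one mult_1_right)
  finally have e: "ee (k1 * 0 + k2 * 0 + k3 * (4/5) + k4 * (4/5)) = ee \<alpha>" .
  have e2: "ee (k1 * (1/2) + k2 * (1/2) + k3 * (3/10) + k4 * (3/10)) = ee \<alpha>"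
    unfolding \<alpha>_def by (rule arg_cong[where f=ee]) (simp add: field_simps)
  have "DD t z (c1 + k1) (c2 + k2) (c3 + k3) (c4 + k4) =
      ee \<alpha> * Rs t z c1 c2 c3 c4 (1/2) (1/2) (3/10) (3/10) + ee \<alpha> * Rs t z c1 c2 c3 c4 0 0 (4/5) (4/5)"
    by (simp only: DD_split[OF assms(1)] Rs_shift[OF assms(2-5)] e e2)
  also have "\<dots> = ee \<alpha> * DD t z c1 c2 c3 c4"
    by (simp only: DD_split[OF assms(1)] distrib_left)
  finally show ?thesis unfolding \<alpha>_def .
qed

lemma Rs_DD:
  assumes "Im t > 0"
  shows "2 * Rs t z c1 c2 c3 c4 (1/2) (1/2) (3/10) (3/10) = DD t z c1 c2 c3 c4 - DD t z (c1 + 1) c2 c3 c4"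
proof -
  have "DD t z (c1 + 1) (c2 + 0) (c3 + 0) (c4 + 0) =
     ee (1 * (1/2) + 0 * (1/2) + 0 * (3/10) + 0 * (3/10)) * Rs t z c1 c2 c3 c4 (1/2) (1/2) (3/10) (3/10)
     + ee (1 * 0 + 0 * 0 + 0 * (4/5) + 0 * (4/5)) * Rs t z c1 c2 c3 c4 0 0 (4/5) (4/5)"
    unfolding DD_split[OF assms] by (subst (1 2) Rs_shift) auto
  then have "DD t z (c1 + 1) c2 c3 c4 = - Rs t z c1 c2 c3 c4 (1/2) (1/2) (3/10) (3/10) + Rs t z c1 c2 c3 c4 0 0 (4/5) (4/5)"
    by (simp add: ee_half ee_zero)
  then show ?thesis unfolding DD_split[OF assms] by simp
qed

lemma DD_H': "x1 = (c1-c2+c3-c4)/2 \<Longrightarrow> x2 = (c1-c2-c3+c4)/2 \<Longrightarrow> x3 = (c1+c2+c3+c4)/2 \<Longrightarrow>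
   x4 = (-c1-c2+c3+c4)/2 \<Longrightarrow> DD t z c1 c2 c3 c4 = DD t z x1 x2 x3 x4"
  using DD_H[of t z c1 c2 c3 c4] by (simp only:)

lemma DD_T': "x1 = (c1+c2+c3-c4)/2 \<Longrightarrow> x2 = (-c1-c2+c3-c4)/2 \<Longrightarrow> x3 = (c1-c2+c3+c4)/2 \<Longrightarrow>
   x4 = (-c1+c2+c3+c4)/2 \<Longrightarrow> DD t z c1 c2 c3 c4 = DD t z x1 x2 x3 x4"
proof -
  assume h: "x1 = (c1+c2+c3-c4)/2" "x2 = (-c1-c2+c3-c4)/2" "x3 = (c1-c2+c3+c4)/2" "x4 = (-c1+c2+c3+c4)/2"
  have "DD t z x1 x2 x3 x4 = DD t z ((x1-x2+x3-x4)/2) ((x1-x2-x3+x4)/2) ((x1+x2+x3+x4)/2) ((-x1-x2+x3+x4)/2)"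
    by (rule DD_H)
  moreover have "((x1-x2+x3-x4)/2) = c1" "((x1-x2-x3+x4)/2) = c2" "((x1+x2+x3+x4)/2) = c3" "((-x1-x2+x3+x4)/2) = c4"
    using h by (simp_all add: field_simps)
  ultimately show ?thesis by (simp only:)
qed

lemma DD_N': "x1 = - c1 \<Longrightarrow> DD t z c1 c2 c3 c4 = DD t z x1 c2 c3 c4"
  using DD_N[of t z c1 c2 c3 c4] by (simp only:)

lemma DD_shift':
  assumes "Im t > 0" "x1 = c1 + ka" "x2 = c2 + kb" "x3 = c3 + kc" "x4 = c4 + kd"
    "ka \<in> \<int>" "kb \<in> \<int>" "kc \<in> \<int>" "kd \<in> \<int>" "(ka + kb + kc + kd) / 2 \<in> \<int>"
    "r = ka/2 + kb/2 + 3*kc/10 + 3*kd/10"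
  shows "DD t z x1 x2 x3 x4 = ee r * DD t z c1 c2 c3 c4"
  using DD_shift[OF assms(1,6-10)] assms(2-5,11) by simp

lemma test1:
  assumes "Im t > 0"
  shows "True"
proof -
  have p05_0: "DD t z (3/10) (3/10) (1/10) (9/10) = DD t z (-1/10) (-7/10) (1/2) (1/2)" by (rule DD_T') simp_all
  have p05_1: "DD t z (-1/10) (-7/10) (1/2) (1/2) = DD t z (1/10) (-7/10) (1/2) (1/2)" by (rule DD_N') simp_all
  have p05_2: "DD t z (11/10) (3/10) (1/2) (1/2) = ee (1) * DD t z (1/10) (-7/10) (1/2) (1/2)" by (rule DD_shift'[where ka="1" and kb="1" and kc="0" and kd="0"]) (simp_all add: assms)
  have p13_0: "DD t z (13/10) (3/10) (1/10) (9/10) = DD t z (1/10) (9/10) (13/10) (-3/10)" by (rule DD_H') simp_all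
  have p13_1: "DD t z (1/10) (9/10) (13/10) (-3/10) = DD t z (9/10) (1/10) (13/10) (-3/10)" by (rule DD_X)
  have p13_2: "DD t z (9/10) (1/10) (13/10) (-3/10) = DD t z (-9/10) (1/10) (13/10) (-3/10)" by (rule DD_N') simp_all
  have p13_3: "DD t z (11/10) (1/10) (3/10) (7/10) = ee (1) * DD t z (-9/10) (1/10) (13/10) (-3/10)" by (rule DD_shift'[where ka="2" and kb="0" and kc="-1" and kd="1"]) (simp_all add: assms)
  have p24_0: "DD t z (1/10) (1/10) (3/10) (7/10) = DD t z (1/10) (1/10) (7/10) (3/10)" by (rule DD_Y)
  have p24_1: "DD t z (1/10) (1/10) (7/10) (3/10) = DD t z (3/10) (1/10) (1/2) (1/2)" by (rule DD_T') simp_all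
  have p24_2: "DD t z (3/10) (1/10) (1/2) (1/2) = DD t z (1/10) (3/10) (1/2) (1/2)" by (rule DD_X)
  have p24_3: "DD t z (1/10) (3/10) (1/2) (1/2) = ee (0) * DD t z (1/10) (3/10) (1/2) (1/2)" by (rule DD_shift'[where ka="0" and kb="0" and kc="0" and kd="0"]) (simp_all add: assms)
  show ?thesis by simp
qed

definition PP where "PP t z c1 c2 c3 c4 = th1 t 0 c1 (1/2) * (th1 t 0 c2 (1/2) * (th1 t z c3 (3/10) * th1 t z c4 (3/10)))"

lemma PP_DD:
  assumes "Im t > 0" "x = c1 + 1"
  shows "2 * PP t z c1 c2 c3 c4 = DD t z c1 c2 c3 c4 - DD t z x c2 c3 c4"
  using Rs_DD[OF assms(1), of z c1 c2 c3 c4] FF_infsum[OF assms(1)] assms(2)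
  unfolding PP_def Rs_def by simp

lemma ee_facts: "ee 0 = 1" "ee 1 = 1" "ee (6/5) = ee (1/5)" "ee (4/5) = ee (1/5) ^ 4"
  "ee (9/5) = ee (1/5) ^ 4" "ee (1/5) ^ 5 = 1"
proof -
  show e0: "ee 0 = 1" by (rule ee_zero)
  show e1: "ee 1 = 1" by (rule ee_int) simp
  have p: "ee (1/5) ^ n = ee (real n / 5)" for n
    by (induction n) (simp_all add: ee_zero ee_add[symmetric] field_simps)
  show "ee (6/5) = ee (1/5)" using ee_add[of "1/5" 1] e1 by simp
  show "ee (4/5) = ee (1/5) ^ 4" using p[of 4] by simp
  show "ee (9/5) = ee (1/5) ^ 4" using p[of 4] ee_add[of "4/5" 1] e1 by simp
  show "ee (1/5) ^ 5 = 1" using p[of 5] e1 by simp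
qed

lemma ident0:
  assumes "Im t > 0"
  shows "(1) * PP t z (3/10) (3/10) (1/10) (9/10) + (-1) * PP t z (1/10) (1/10) (3/10) (7/10) + (1) * PP t z (1/10) (3/10) (1/2) (1/2) = 0"
proof -
  have d0: "2 * PP t z (3/10) (3/10) (1/10) (9/10) = DD t z (3/10) (3/10) (1/10) (9/10) - DD t z (13/10) (3/10) (1/10) (9/10)" by (rule PP_DD) (simp_all add: assms)
  have d1: "2 * PP t z (1/10) (1/10) (3/10) (7/10) = DD t z (1/10) (1/10) (3/10) (7/10) - DD t z (11/10) (1/10) (3/10) (7/10)" by (rule PP_DD) (simp_all add: assms)
  have d2: "2 * PP t z (1/10) (3/10) (1/2) (1/2) = DD t z (1/10) (3/10) (1/2) (1/2) - DD t z (11/10) (3/10) (1/2) (1/2)" by (rule PP_DD) (simp_all add: assms)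
  have q05_0: "DD t z (3/10) (3/10) (1/10) (9/10) = DD t z (-1/10) (-7/10) (1/2) (1/2)" by (rule DD_T') simp_all
  have q05_1: "DD t z (-1/10) (-7/10) (1/2) (1/2) = DD t z (1/10) (-7/10) (1/2) (1/2)" by (rule DD_N') simp_all
  have q05_2: "DD t z (11/10) (3/10) (1/2) (1/2) = ee (1) * DD t z (1/10) (-7/10) (1/2) (1/2)" by (rule DD_shift'[where ka="1" and kb="1" and kc="0" and kd="0"]) (simp_all add: assms)
  have r05: "DD t z (11/10) (3/10) (1/2) (1/2) = ee (1) * DD t z (3/10) (3/10) (1/10) (9/10)" by (simp only: q05_0 q05_1 q05_2)
  have q13_0: "DD t z (13/10) (3/10) (1/10) (9/10) = DD t z (1/10) (9/10) (13/10) (-3/10)" by (rule DD_H') simp_all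
  have q13_1: "DD t z (1/10) (9/10) (13/10) (-3/10) = DD t z (9/10) (1/10) (13/10) (-3/10)" by (rule DD_X)
  have q13_2: "DD t z (9/10) (1/10) (13/10) (-3/10) = DD t z (-9/10) (1/10) (13/10) (-3/10)" by (rule DD_N') simp_all
  have q13_3: "DD t z (11/10) (1/10) (3/10) (7/10) = ee (1) * DD t z (-9/10) (1/10) (13/10) (-3/10)" by (rule DD_shift'[where ka="2" and kb="0" and kc="-1" and kd="1"]) (simp_all add: assms)
  have r13: "DD t z (11/10) (1/10) (3/10) (7/10) = ee (1) * DD t z (13/10) (3/10) (1/10) (9/10)" by (simp only: q13_0 q13_1 q13_2 q13_3)
  have q24_0: "DD t z (1/10) (1/10) (3/10) (7/10) = DD t z (1/10) (1/10) (7/10) (3/10)" by (rule DD_Y)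
  have q24_1: "DD t z (1/10) (1/10) (7/10) (3/10) = DD t z (3/10) (1/10) (1/2) (1/2)" by (rule DD_T') simp_all
  have q24_2: "DD t z (3/10) (1/10) (1/2) (1/2) = DD t z (1/10) (3/10) (1/2) (1/2)" by (rule DD_X)
  have r24: "DD t z (1/10) (3/10) (1/2) (1/2) = ee (0) * DD t z (1/10) (1/10) (3/10) (7/10)" by (simp only: q24_0 q24_1 q24_2 ee_zero mult_1_left)
  have "2 * ((1) * PP t z (3/10) (3/10) (1/10) (9/10) + (-1) * PP t z (1/10) (1/10) (3/10) (7/10) + (1) * PP t z (1/10) (3/10) (1/2) (1/2)) = 0"
    using d0 d1 d2 r05 r13 r24 ee_facts by algebra
  then show ?thesis by (subst (asm) mult_eq_0_iff) simp
qed

lemma ident1: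
  assumes "Im t > 0"
  shows "(ee (1/5)) * PP t z (1/10) (1/10) (3/10) (9/10) + (- ee (1/5)) * PP t z (3/10) (3/10) (1/2) (7/10) + (1) * PP t z (1/10) (3/10) (1/10) (1/10) = 0"
proof -
  have d0: "2 * PP t z (1/10) (1/10) (3/10) (9/10) = DD t z (1/10) (1/10) (3/10) (9/10) - DD t z (11/10) (1/10) (3/10) (9/10)" by (rule PP_DD) (simp_all add: assms)
  have d1: "2 * PP t z (3/10) (3/10) (1/2) (7/10) = DD t z (3/10) (3/10) (1/2) (7/10) - DD t z (13/10) (3/10) (1/2) (7/10)" by (rule PP_DD) (simp_all add: assms)
  have d2: "2 * PP t z (1/10) (3/10) (1/10) (1/10) = DD t z (1/10) (3/10) (1/10) (1/10) - DD t z (11/10) (3/10) (1/10) (1/10)" by (rule PP_DD) (simp_all add: assms)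
  have q02_0: "DD t z (1/10) (1/10) (3/10) (9/10) = DD t z (-3/10) (3/10) (7/10) (1/2)" by (rule DD_H') simp_all
  have q02_1: "DD t z (-3/10) (3/10) (7/10) (1/2) = DD t z (3/10) (3/10) (7/10) (1/2)" by (rule DD_N') simp_all
  have q02_2: "DD t z (3/10) (3/10) (7/10) (1/2) = DD t z (3/10) (3/10) (1/2) (7/10)" by (rule DD_Y)
  have r02: "DD t z (3/10) (3/10) (1/2) (7/10) = ee (0) * DD t z (1/10) (1/10) (3/10) (9/10)" by (simp only: q02_0 q02_1 q02_2 ee_zero mult_1_left)
  have q14_0: "DD t z (11/10) (1/10) (3/10) (9/10) = DD t z (3/10) (-9/10) (11/10) (1/10)" by (rule DD_T') simp_all
  have q14_1: "DD t z (3/10) (-9/10) (11/10) (1/10) = DD t z (-9/10) (3/10) (11/10) (1/10)" by (rule DD_X)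
  have q14_2: "DD t z (1/10) (3/10) (1/10) (1/10) = ee (1/5) * DD t z (-9/10) (3/10) (11/10) (1/10)" by (rule DD_shift'[where ka="1" and kb="0" and kc="-1" and kd="0"]) (simp_all add: assms)
  have r14: "DD t z (1/10) (3/10) (1/10) (1/10) = ee (1/5) * DD t z (11/10) (1/10) (3/10) (9/10)" by (simp only: q14_0 q14_1 q14_2)
  have q35_0: "DD t z (13/10) (3/10) (1/2) (7/10) = DD t z (-13/10) (3/10) (1/2) (7/10)" by (rule DD_N') simp_all
  have q35_1: "DD t z (-13/10) (3/10) (1/2) (7/10) = DD t z (-9/10) (-7/10) (1/10) (11/10)" by (rule DD_H') simp_all
  have q35_2: "DD t z (11/10) (3/10) (1/10) (1/10) = ee (6/5) * DD t z (-9/10) (-7/10) (1/10) (11/10)" by (rule DD_shift'[where ka="2" and kb="1" and kc="0" and kd="-1"]) (simp_all add: assms)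
  have r35: "DD t z (11/10) (3/10) (1/10) (1/10) = ee (6/5) * DD t z (13/10) (3/10) (1/2) (7/10)" by (simp only: q35_0 q35_1 q35_2)
  have "2 * ((ee (1/5)) * PP t z (1/10) (1/10) (3/10) (9/10) + (- ee (1/5)) * PP t z (3/10) (3/10) (1/2) (7/10) + (1) * PP t z (1/10) (3/10) (1/10) (1/10)) = 0"
    using d0 d1 d2 r02 r14 r35 ee_facts by algebra
  then show ?thesis by (subst (asm) mult_eq_0_iff) simp
qed

lemma ident2:
  assumes "Im t > 0"
  shows "(1) * PP t z (3/10) (3/10) (1/10) (3/10) + (ee (1/5)) * PP t z (1/10) (1/10) (1/2) (9/10) + (- ee (1/5)) * PP t z (1/10) (3/10) (7/10) (7/10) = 0"
proof -
  have d0: "2 * PP t z (3/10) (3/10) (1/10) (3/10) = DD t z (3/10) (3/10) (1/10) (3/10) - DD t z (13/10) (3/10) (1/10) (3/10)" by (rule PP_DD) (simp_all add: assms)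
  have d1: "2 * PP t z (1/10) (1/10) (1/2) (9/10) = DD t z (1/10) (1/10) (1/2) (9/10) - DD t z (11/10) (1/10) (1/2) (9/10)" by (rule PP_DD) (simp_all add: assms)
  have d2: "2 * PP t z (1/10) (3/10) (7/10) (7/10) = DD t z (1/10) (3/10) (7/10) (7/10) - DD t z (11/10) (3/10) (7/10) (7/10)" by (rule PP_DD) (simp_all add: assms)
  have q03_0: "DD t z (3/10) (3/10) (1/10) (3/10) = DD t z (-1/10) (1/10) (1/2) (-1/10)" by (rule DD_H') simp_all
  have q03_1: "DD t z (-1/10) (1/10) (1/2) (-1/10) = DD t z (1/10) (1/10) (1/2) (-1/10)" by (rule DD_N') simp_all
  have q03_2: "DD t z (11/10) (1/10) (1/2) (9/10) = ee (4/5) * DD t z (1/10) (1/10) (1/2) (-1/10)" by (rule DD_shift'[where ka="1" and kb="0" and kc="0" and kd="1"]) (simp_all add: assms)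
  have r03: "DD t z (11/10) (1/10) (1/2) (9/10) = ee (4/5) * DD t z (3/10) (3/10) (1/10) (3/10)" by (simp only: q03_0 q03_1 q03_2)
  have q15_0: "DD t z (13/10) (3/10) (1/10) (3/10) = DD t z (-13/10) (3/10) (1/10) (3/10)" by (rule DD_N') simp_all
  have q15_1: "DD t z (-13/10) (3/10) (1/10) (3/10) = DD t z (-9/10) (-7/10) (-3/10) (7/10)" by (rule DD_H') simp_all
  have q15_2: "DD t z (11/10) (3/10) (7/10) (7/10) = ee (9/5) * DD t z (-9/10) (-7/10) (-3/10) (7/10)" by (rule DD_shift'[where ka="2" and kb="1" and kc="1" and kd="0"]) (simp_all add: assms)
  have r15: "DD t z (11/10) (3/10) (7/10) (7/10) = ee (9/5) * DD t z (13/10) (3/10) (1/10) (3/10)" by (simp only: q15_0 q15_1 q15_2)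
  have q24_0: "DD t z (1/10) (1/10) (1/2) (9/10) = DD t z (1/10) (1/10) (9/10) (1/2)" by (rule DD_Y)
  have q24_1: "DD t z (1/10) (1/10) (9/10) (1/2) = DD t z (3/10) (1/10) (7/10) (7/10)" by (rule DD_T') simp_all
  have q24_2: "DD t z (3/10) (1/10) (7/10) (7/10) = DD t z (1/10) (3/10) (7/10) (7/10)" by (rule DD_X)
  have r24: "DD t z (1/10) (3/10) (7/10) (7/10) = ee (0) * DD t z (1/10) (1/10) (1/2) (9/10)" by (simp only: q24_0 q24_1 q24_2 ee_zero mult_1_left)
  have "2 * ((1) * PP t z (3/10) (3/10) (1/10) (3/10) + (ee (1/5)) * PP t z (1/10) (1/10) (1/2) (9/10) + (- ee (1/5)) * PP t z (1/10) (3/10) (7/10) (7/10)) = 0"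
    using d0 d1 d2 r03 r15 r24 ee_facts by algebra
  then show ?thesis by (subst (asm) mult_eq_0_iff) simp
qed

lemma ident3:
  assumes "Im t > 0"
  shows "(1) * PP t z (1/10) (1/10) (1/10) (1/2) + (ee (1/5)) * PP t z (3/10) (3/10) (7/10) (9/10) + (-1) * PP t z (1/10) (3/10) (3/10) (3/10) = 0"
proof -
  have d0: "2 * PP t z (1/10) (1/10) (1/10) (1/2) = DD t z (1/10) (1/10) (1/10) (1/2) - DD t z (11/10) (1/10) (1/10) (1/2)" by (rule PP_DD) (simp_all add: assms)
  have d1: "2 * PP t z (3/10) (3/10) (7/10) (9/10) = DD t z (3/10) (3/10) (7/10) (9/10) - DD t z (13/10) (3/10) (7/10) (9/10)" by (rule PP_DD) (simp_all add: assms)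
  have d2: "2 * PP t z (1/10) (3/10) (3/10) (3/10) = DD t z (1/10) (3/10) (3/10) (3/10) - DD t z (11/10) (3/10) (3/10) (3/10)" by (rule PP_DD) (simp_all add: assms)
  have q04_0: "DD t z (1/10) (1/10) (1/10) (1/2) = DD t z (1/10) (1/10) (1/2) (1/10)" by (rule DD_Y)
  have q04_1: "DD t z (1/10) (1/10) (1/2) (1/10) = DD t z (3/10) (1/10) (3/10) (3/10)" by (rule DD_T') simp_all
  have q04_2: "DD t z (3/10) (1/10) (3/10) (3/10) = DD t z (1/10) (3/10) (3/10) (3/10)" by (rule DD_X)
  have r04: "DD t z (1/10) (3/10) (3/10) (3/10) = ee (0) * DD t z (1/10) (1/10) (1/10) (1/2)" by (simp only: q04_0 q04_1 q04_2 ee_zero mult_1_left)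
  have q12_0: "DD t z (11/10) (1/10) (1/10) (1/2) = DD t z (-11/10) (1/10) (1/10) (1/2)" by (rule DD_N') simp_all
  have q12_1: "DD t z (-11/10) (1/10) (1/10) (1/2) = DD t z (-7/10) (3/10) (-3/10) (9/10)" by (rule DD_T') simp_all
  have q12_2: "DD t z (3/10) (3/10) (7/10) (9/10) = ee (4/5) * DD t z (-7/10) (3/10) (-3/10) (9/10)" by (rule DD_shift'[where ka="1" and kb="0" and kc="1" and kd="0"]) (simp_all add: assms)
  have r12: "DD t z (3/10) (3/10) (7/10) (9/10) = ee (4/5) * DD t z (11/10) (1/10) (1/10) (1/2)" by (simp only: q12_0 q12_1 q12_2)
  have q35_0: "DD t z (13/10) (3/10) (7/10) (9/10) = DD t z (-13/10) (3/10) (7/10) (9/10)" by (rule DD_N') simp_all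
  have q35_1: "DD t z (-13/10) (3/10) (7/10) (9/10) = DD t z (-9/10) (-7/10) (3/10) (13/10)" by (rule DD_H') simp_all
  have q35_2: "DD t z (11/10) (3/10) (3/10) (3/10) = ee (6/5) * DD t z (-9/10) (-7/10) (3/10) (13/10)" by (rule DD_shift'[where ka="2" and kb="1" and kc="0" and kd="-1"]) (simp_all add: assms)
  have r35: "DD t z (11/10) (3/10) (3/10) (3/10) = ee (6/5) * DD t z (13/10) (3/10) (7/10) (9/10)" by (simp only: q35_0 q35_1 q35_2)
  have "2 * ((1) * PP t z (1/10) (1/10) (1/10) (1/2) + (ee (1/5)) * PP t z (3/10) (3/10) (7/10) (9/10) + (-1) * PP t z (1/10) (3/10) (3/10) (3/10)) = 0"
    using d0 d1 d2 r04 r12 r35 ee_facts by algebra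
  then show ?thesis by (subst (asm) mult_eq_0_iff) simp
qed

lemma ident4:
  assumes "Im t > 0"
  shows "(1) * PP t z (1/10) (1/10) (1/10) (7/10) + (-1) * PP t z (3/10) (3/10) (3/10) (1/2) + (ee (1/5)) * PP t z (1/10) (3/10) (9/10) (9/10) = 0"
proof -
  have d0: "2 * PP t z (1/10) (1/10) (1/10) (7/10) = DD t z (1/10) (1/10) (1/10) (7/10) - DD t z (11/10) (1/10) (1/10) (7/10)" by (rule PP_DD) (simp_all add: assms)
  have d1: "2 * PP t z (3/10) (3/10) (3/10) (1/2) = DD t z (3/10) (3/10) (3/10) (1/2) - DD t z (13/10) (3/10) (3/10) (1/2)" by (rule PP_DD) (simp_all add: assms)
  have d2: "2 * PP t z (1/10) (3/10) (9/10) (9/10) = DD t z (1/10) (3/10) (9/10) (9/10) - DD t z (11/10) (3/10) (9/10) (9/10)" by (rule PP_DD) (simp_all add: assms)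
  have q02_0: "DD t z (1/10) (1/10) (1/10) (7/10) = DD t z (-3/10) (3/10) (1/2) (3/10)" by (rule DD_H') simp_all
  have q02_1: "DD t z (-3/10) (3/10) (1/2) (3/10) = DD t z (3/10) (3/10) (1/2) (3/10)" by (rule DD_N') simp_all
  have q02_2: "DD t z (3/10) (3/10) (1/2) (3/10) = DD t z (3/10) (3/10) (3/10) (1/2)" by (rule DD_Y)
  have r02: "DD t z (3/10) (3/10) (3/10) (1/2) = ee (0) * DD t z (1/10) (1/10) (1/10) (7/10)" by (simp only: q02_0 q02_1 q02_2 ee_zero mult_1_left)
  have q14_0: "DD t z (11/10) (1/10) (1/10) (7/10) = DD t z (3/10) (-9/10) (9/10) (-1/10)" by (rule DD_T') simp_all
  have q14_1: "DD t z (3/10) (-9/10) (9/10) (-1/10) = DD t z (-9/10) (3/10) (9/10) (-1/10)" by (rule DD_X)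
  have q14_2: "DD t z (1/10) (3/10) (9/10) (9/10) = ee (4/5) * DD t z (-9/10) (3/10) (9/10) (-1/10)" by (rule DD_shift'[where ka="1" and kb="0" and kc="0" and kd="1"]) (simp_all add: assms)
  have r14: "DD t z (1/10) (3/10) (9/10) (9/10) = ee (4/5) * DD t z (11/10) (1/10) (1/10) (7/10)" by (simp only: q14_0 q14_1 q14_2)
  have q35_0: "DD t z (13/10) (3/10) (3/10) (1/2) = DD t z (-13/10) (3/10) (3/10) (1/2)" by (rule DD_N') simp_all
  have q35_1: "DD t z (-13/10) (3/10) (3/10) (1/2) = DD t z (-9/10) (-7/10) (-1/10) (9/10)" by (rule DD_H') simp_all
  have q35_2: "DD t z (11/10) (3/10) (9/10) (9/10) = ee (9/5) * DD t z (-9/10) (-7/10) (-1/10) (9/10)" by (rule DD_shift'[where ka="2" and kb="1" and kc="1" and kd="0"]) (simp_all add: assms)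
  have r35: "DD t z (11/10) (3/10) (9/10) (9/10) = ee (9/5) * DD t z (13/10) (3/10) (3/10) (1/2)" by (simp only: q35_0 q35_1 q35_2)
  have "2 * ((1) * PP t z (1/10) (1/10) (1/10) (7/10) + (-1) * PP t z (3/10) (3/10) (3/10) (1/2) + (ee (1/5)) * PP t z (1/10) (3/10) (9/10) (9/10)) = 0"
    using d0 d1 d2 r02 r14 r35 ee_facts by algebra
  then show ?thesis by (subst (asm) mult_eq_0_iff) simp
qed

lemma theta_th1: "theta_char e e' z t = th1 t z (e'/2) (e/2)"
  unfolding theta_char_def th1_def tf_def by simp

theorem proposition6p6:
  fixes z t :: complex
  assumes "Im t > 0"
  defines "\<zeta>5 \<equiv> exp (2 * of_real pi * \<i> / 5)"
      and "A \<equiv> theta_const 1 (1/5) t"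
      and "B \<equiv> theta_const 1 (3/5) t"
      and "g \<equiv> (\<lambda>k::nat. theta_char (3/5) (real k / 5) z t)"
  shows "B^2 * g 1 * g 9 - A^2 * g 3 * g 7 + A * B * (g 5)^2 = 0 \<and>
         \<zeta>5 * A^2 * g 3 * g 9 - \<zeta>5 * B^2 * g 5 * g 7 + A * B * (g 1)^2 = 0 \<and>
         B^2 * g 1 * g 3 + \<zeta>5 * A^2 * g 5 * g 9 - \<zeta>5 * A * B * (g 7)^2 = 0 \<and>
         A^2 * g 1 * g 5 + \<zeta>5 * B^2 * g 7 * g 9 - A * B * (g 3)^2 = 0 \<and>
         A^2 * g 1 * g 7 - B^2 * g 3 * g 5 + \<zeta>5 * A * B * (g 9)^2 = 0"
proof -
  have z5: "\<zeta>5 = ee (1/5)" unfolding \<zeta>5_def ee_def by simp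
  have hA: "A = th1 t 0 (1/10) (1/2)" unfolding A_def theta_const_def theta_th1 by simp
  have hB: "B = th1 t 0 (3/10) (1/2)" unfolding B_def theta_const_def theta_th1 by simp
  have g1: "g 1 = th1 t z (1/10) (3/10)" unfolding g_def theta_th1 by simp
  have g3: "g 3 = th1 t z (3/10) (3/10)" unfolding g_def theta_th1 by simp
  have g5: "g 5 = th1 t z (1/2) (3/10)" unfolding g_def theta_th1 by simp
  have g7: "g 7 = th1 t z (7/10) (3/10)" unfolding g_def theta_th1 by simp
  have g9: "g 9 = th1 t z (9/10) (3/10)" unfolding g_def theta_th1 by simp
  note I0 = ident0[where z=z, OF assms(1), unfolded PP_def] and I1 = ident1[where z=z, OF assms(1), unfolded PP_def]
   and I2 = ident2[where z=z, OF assms(1), unfolded PP_def] and I3 = ident3[where z=z, OF assms(1), unfolded PP_def]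
   and I4 = ident4[where z=z, OF assms(1), unfolded PP_def]
  show ?thesis
    unfolding z5 hA hB g1 g3 g5 g7 g9
    using I0 I1 I2 I3 I4 by (intro conjI; algebra)
qed

end
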